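(* There is an absolute constant $c>0$ such that for every $n\ge1$, $L>0$, $T\ge 1$, and every deterministic sequential query strategy on $[0,1]^n$ (i.e. $x_1\in[0,1]^n$ is fixed and each $x_{t+1}\in[0,1]^n$ is a function of $x_1,\dots,x_t$ and $f(x_1),\dots,f(x_t)$), there exists a function $f:[0,1]^n\to\mathbb{R}$ with $|f(x)-f(y)|\le L\|x-y\|$ for all $x,y\in[0,1]^n$ such that the queries $x_1,\dots,x_T$ produced by the strategy on $f$ satisfy $$\frac1T\sum_{t=1}^T f(x_t)-\min_{x\in[0,1]^n}f(x)\ \ge\ c\,L\sqrt{n}\,T^{-1/n}.$$
   Context: $\|\cdot\|$ denotes the Euclidean norm on $\mathbb{R}^n$. *)

theory Defs
  imports "HOL-Analysis.Analysis"
begin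

text \<open>Points of R^n are represented as functions nat => real that vanish at indices >= n.\<close>

definition cube :: "nat \<Rightarrow> (nat \<Rightarrow> real) set" where
  "cube n = {x. (\<forall>i<n. 0 \<le> x i \<and> x i \<le> 1) \<and> (\<forall>i\<ge>n. x i = 0)}"

definition enorm :: "nat \<Rightarrow> (nat \<Rightarrow> real) \<Rightarrow> real" where
  "enorm n x = sqrt (\<Sum>i<n. (x i)\<^sup>2)"

text \<open>A deterministic sequential query strategy S maps the history
  [(x_1, f x_1), ..., (x_t, f x_t)] to the next query x_{t+1}; x_1 = S [].
  hist S f t is the history after t queries.\<close>

fun hist :: "(((nat \<Rightarrow> real) \<times> real) list \<Rightarrow> (nat \<Rightarrow> real)) \<Rightarrow> ((nat \<Rightarrow> real) \<Rightarrow> real)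
    \<Rightarrow> nat \<Rightarrow> ((nat \<Rightarrow> real) \<times> real) list" where
  "hist S f 0 = []"
| "hist S f (Suc t) = hist S f t @ [(S (hist S f t), f (S (hist S f t)))]"

text \<open>query S f t is x_{t+1} (0-indexed).\<close>
definition query :: "(((nat \<Rightarrow> real) \<times> real) list \<Rightarrow> (nat \<Rightarrow> real)) \<Rightarrow> ((nat \<Rightarrow> real) \<Rightarrow> real)
    \<Rightarrow> nat \<Rightarrow> (nat \<Rightarrow> real)" where
  "query S f t = S (hist S f t)"

end

theory Submission
  imports Defs
begin

lemma geom2: "(\<Sum>j<m. (1/2::real)^j) \<le> 2"
proof -
  have "(\<Sum>j<m. (1/2::real)^j) = 2 - 2*(1/2)^m"
    by (induction m) auto
  thus ?thesis by simp
qed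

lemma geom_abs: "(\<Sum>j<m. (1/2::real)^(if c \<le> j then j - c else c - j)) \<le> 4"
proof -
  let ?h = "\<lambda>j. (1/2::real)^(if c \<le> j then j - c else c - j)"
  have "(\<Sum>j<m. ?h j) \<le> (\<Sum>j<c. ?h j) + (\<Sum>j\<in>{c..<c+m}. ?h j)"
  proof -
    have "{..<m} \<subseteq> {..<c} \<union> {c..<c+m}" by auto
    hence "(\<Sum>j<m. ?h j) \<le> (\<Sum>j\<in>{..<c} \<union> {c..<c+m}. ?h j)"
      by (intro sum_mono2) auto
    also have "\<dots> = (\<Sum>j<c. ?h j) + (\<Sum>j\<in>{c..<c+m}. ?h j)"
      by (intro sum.union_disjoint) auto
    finally show ?thesis .
  qed
  also have "(\<Sum>j<c. ?h j) = (\<Sum>j<c. (1/2::real)^(c - j))"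
    by (intro sum.cong) auto
  also have "\<dots> = (\<Sum>i<c. (1/2::real)^(Suc i))"
    by (subst sum.nat_diff_reindex[symmetric]) (intro sum.cong, auto simp: Suc_diff_Suc)
  also have "\<dots> \<le> (\<Sum>i<c. (1/2::real)^i)"
    by (intro sum_mono) auto
  also have "(\<Sum>j\<in>{c..<c+m}. ?h j) = (\<Sum>j\<in>{0+c..<m+c}. (1/2::real)^(j-c))"
    by (intro sum.cong) (auto simp: add.commute)
  also have "\<dots> = (\<Sum>j<m. (1/2::real)^j)"
    by (subst sum.shift_bounds_nat_ivl) (simp add: lessThan_atLeast0)
  finally show ?thesis using geom2[of c] geom2[of m] by linarith
qed

lemma coord_bound:
  fixes x :: real and m :: nat
  assumes x: "0 \<le> x" "x \<le> 1" and m: "m \<ge> 1"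
  shows "(\<Sum>j<m. exp (-(4*real m^2) * ((2*real j+1)/(2*real m) - x)^2)) \<le> 4"
proof -
  define c where "c = min (m - 1) (nat \<lfloor>m * x\<rfloor>)"
  have mpos: "real m > 0" using m by simp
  have c1: "real c \<le> m * x"
  proof -
    have "real c \<le> real (nat \<lfloor>m * x\<rfloor>)" unfolding c_def by simp
    also have "\<dots> \<le> m * x" using x by simp
    finally show ?thesis .
  qed
  have c2: "m * x \<le> real c + 1"
  proof (cases "nat \<lfloor>m * x\<rfloor> \<le> m - 1")
    case True
    hence "c = nat \<lfloor>m * x\<rfloor>" unfolding c_def by simp
    thus ?thesis using x by (simp add: of_nat_nat)
  next
    case False
    hence "c = m - 1" unfolding c_def by simp
    hence "real c + 1 = m" using m by simp
    thus ?thesis using x mpos by (simp add: mult_left_le)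
  qed
  have trm: "exp (-(4*real m^2) * ((2*real j+1)/(2*real m) - x)^2)
      \<le> (1/2::real)^(if c \<le> j then j - c else c - j)" for j
  proof -
    define d where "d = (if c \<le> j then j - c else c - j)"
    have dist: "real d \<le> 2 * real m * \<bar>(2*real j+1)/(2*real m) - x\<bar>"
    proof (cases "c = j")
      case True thus ?thesis by (simp add: d_def)
    next
      case False
      have e: "2 * real m * ((2*real j+1)/(2*real m) - x) = 2*real j + 1 - 2 * (m*x)"
        using mpos by (simp add: field_simps)
      show ?thesis
      proof (cases "c < j")
        case True
        hence "real d = real j - real c" by (simp add: d_def of_nat_diff)
        moreover have "real j \<ge> real c + 1" using True by simp
        moreover have "2 * real m * \<bar>(2*real j+1)/(2*real m) - x\<bar> = \<bar>2*real j + 1 - 2 * (m*x)\<bar>"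
          using mpos by (subst e[symmetric]) (simp add: abs_mult)
        ultimately show ?thesis using c2 by linarith
      next
        case False2: False
        hence "real d = real c - real j" using False by (simp add: d_def of_nat_diff)
        moreover have "real c \<ge> real j + 1" using False False2 by simp
        moreover have "2 * real m * \<bar>(2*real j+1)/(2*real m) - x\<bar> = \<bar>2*real j + 1 - 2 * (m*x)\<bar>"
          using mpos by (subst e[symmetric]) (simp add: abs_mult)
        ultimately show ?thesis using c1 abs_ge_minus_self[of "2*real j + 1 - 2 * (m*x)"] by argo
      qed
    qed
    have "(real d)^2 \<le> (2 * real m * \<bar>(2*real j+1)/(2*real m) - x\<bar>)^2"
      using dist by (intro power_mono) auto
    also have "\<dots> = 4*real m^2 * ((2*real j+1)/(2*real m) - x)^2"
      by (simp add: power_mult_distrib)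
    finally have sq: "(real d)^2 \<le> 4*real m^2 * ((2*real j+1)/(2*real m) - x)^2" .
    have "exp (-(4*real m^2) * ((2*real j+1)/(2*real m) - x)^2) \<le> exp (- real d)"
    proof -
      have "d \<le> d^2" by (simp add: power2_eq_square le_square)
      hence "real d \<le> (real d)^2" by (metis of_nat_le_iff of_nat_power)
      hence "- (4*real m^2) * ((2*real j+1)/(2*real m) - x)^2 \<le> - real d" using sq by linarith
      thus ?thesis by (subst exp_le_cancel_iff)
    qed
    also have "exp (- real d) = exp (-1) ^ d"
      using exp_of_nat_mult[of d "-1"] by simp
    also have "\<dots> \<le> (1/2)^d"
    proof (intro power_mono)
      have "2 \<le> exp (1::real)" using exp_ge_add_one_self[of 1] by simp
      thus "exp (-1) \<le> (1/2::real)" by (simp add: exp_minus field_simps)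
    qed auto
    finally show ?thesis unfolding d_def .
  qed
  have "(\<Sum>j<m. exp (-(4*real m^2) * ((2*real j+1)/(2*real m) - x)^2))
      \<le> (\<Sum>j<m. (1/2::real)^(if c \<le> j then j - c else c - j))"
    by (intro sum_mono trm)
  also have "\<dots> \<le> 4" by (rule geom_abs)
  finally show ?thesis .
qed

lemma grid_far:
  fixes q :: "nat \<Rightarrow> nat \<Rightarrow> real" and n m T :: nat
  assumes m: "m \<ge> 1" and q: "\<And>t i. t < T \<Longrightarrow> i < n \<Longrightarrow> 0 \<le> q t i \<and> q t i \<le> 1"
    and big: "real T * (exp 1 * 4)^n < real m ^ n"
  shows "\<exists>g \<in> PiE {..<n} (\<lambda>_. {..<m}). \<forall>t<T.
           real n / (4 * real m^2) \<le> (\<Sum>i<n. ((2*real (g i)+1)/(2*real m) - q t i)^2)"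
proof (rule ccontr)
  assume "\<not> ?thesis"
  hence cov: "\<And>g. g \<in> PiE {..<n} (\<lambda>_. {..<m}) \<Longrightarrow> \<exists>t<T.
           (\<Sum>i<n. ((2*real (g i)+1)/(2*real m) - q t i)^2) < real n / (4 * real m^2)"
    by (auto simp: not_le)
  define lam where "lam = 4 * real m^2"
  have mpos: "real m > 0" using m by simp
  have lampos: "lam > 0" unfolding lam_def using mpos by simp
  define P where "P = PiE {..<n} (\<lambda>_. {..<m::nat})"
  define s where "s g t = (\<Sum>i<n. ((2*real (g i)+1)/(2*real m) - q t i)^2)" for g t
  have one: "1 \<le> (\<Sum>t<T. exp (real n - lam * s g t))" if g: "g \<in> P" for g
  proof -
    obtain t where t: "t < T" "s g t < real n / lam"
      using cov[of g] g unfolding P_def s_def lam_def by auto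
    have "lam * s g t < real n" using t(2) lampos by (simp add: field_simps)
    hence "1 \<le> exp (real n - lam * s g t)" by simp
    also have "\<dots> \<le> (\<Sum>t<T. exp (real n - lam * s g t))"
      using t(1) by (intro member_le_sum) auto
    finally show ?thesis .
  qed
  have "real m ^ n = real (card P)"
    unfolding P_def by (simp add: card_PiE)
  also have "\<dots> = (\<Sum>g\<in>P. 1)" by simp
  also have "\<dots> \<le> (\<Sum>g\<in>P. \<Sum>t<T. exp (real n - lam * s g t))"
    by (intro sum_mono one)
  also have "\<dots> = (\<Sum>t<T. \<Sum>g\<in>P. exp (real n - lam * s g t))"
    by (rule sum.swap)
  also have "\<dots> \<le> (\<Sum>t<T. (exp 1 * 4)^n)"
  proof (intro sum_mono)
    fix t assume t: "t \<in> {..<T}"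
    have "(\<Sum>g\<in>P. exp (real n - lam * s g t))
        = exp (real n) * (\<Sum>g\<in>P. \<Prod>i<n. exp (- lam * ((2*real (g i)+1)/(2*real m) - q t i)^2))"
      unfolding sum_distrib_left
    proof (intro sum.cong refl)
      fix g
      have "real n - lam * s g t = real n + (\<Sum>i<n. - lam * ((2*real (g i)+1)/(2*real m) - q t i)^2)"
        unfolding s_def by (simp add: sum_distrib_left sum_negf)
      thus "exp (real n - lam * s g t) = exp (real n) * (\<Prod>i<n. exp (- lam * ((2*real (g i)+1)/(2*real m) - q t i)^2))"
        by (simp only: exp_add exp_sum[OF finite_lessThan])
    qed
    also have "(\<Sum>g\<in>P. \<Prod>i<n. exp (- lam * ((2*real (g i)+1)/(2*real m) - q t i)^2))
        = (\<Prod>i<n. \<Sum>j<m. exp (- lam * ((2*real j+1)/(2*real m) - q t i)^2))"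
      unfolding P_def by (rule prod_sum_PiE[symmetric]) auto
    also have "\<dots> \<le> (\<Prod>i<n. 4)"
      using t q unfolding lam_def by (intro prod_mono conjI coord_bound m sum_nonneg) auto
    also have "exp (real n) = exp 1 ^ n" using exp_of_nat_mult[of n 1] by simp
    finally show "(\<Sum>g\<in>P. exp (real n - lam * s g t)) \<le> (exp 1 * 4)^n"
      by (simp add: power_mult_distrib mult_left_mono)
  qed
  also have "\<dots> = real T * (exp 1 * 4)^n" by simp
  finally show False using big by linarith
qed

lemma enorm_L2: "enorm n z = L2_set z {..<n}"
  unfolding enorm_def L2_set_def by simp

lemma enorm_tri: "enorm n (x - q) \<le> enorm n (x - y) + enorm n (y - q)"
proof -
  have "enorm n (x - q) = L2_set (\<lambda>i. (x - y) i + (y - q) i) {..<n}"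
    unfolding enorm_L2 by (simp add: fun_diff_def)
  also have "\<dots> \<le> enorm n (x - y) + enorm n (y - q)"
    unfolding enorm_L2 by (rule L2_set_triangle_ineq)
  finally show ?thesis .
qed

lemma enorm_sym: "enorm n (x - y) = enorm n (y - x)"
  unfolding enorm_def by (simp add: power2_commute)

lemma enorm_nonneg: "enorm n z \<ge> 0"
  unfolding enorm_def by (simp add: sum_nonneg)

lemma enorm_self: "enorm n (x - x) = 0"
  unfolding enorm_def by simp

theorem theorem2:
  shows "\<exists>c::real. c > 0 \<and>
    (\<forall>(n::nat) (L::real) (T::nat) (S :: ((nat \<Rightarrow> real) \<times> real) list \<Rightarrow> (nat \<Rightarrow> real)).
       n \<ge> 1 \<longrightarrow> L > 0 \<longrightarrow> T \<ge> 1 \<longrightarrow> (\<forall>h. S h \<in> cube n) \<longrightarrow>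
       (\<exists>f :: (nat \<Rightarrow> real) \<Rightarrow> real.
          (\<forall>x\<in>cube n. \<forall>y\<in>cube n. \<bar>f x - f y\<bar> \<le> L * enorm n (x - y)) \<and>
          (\<Sum>t<T. f (query S f t)) / real T - Inf (f ` cube n)
            \<ge> c * L * sqrt (real n) * real T powr (- 1 / real n)))"
proof (intro exI[of _ "1/24"] conjI allI impI)
  fix n :: nat and L :: real and T :: nat and S :: "((nat \<Rightarrow> real) \<times> real) list \<Rightarrow> (nat \<Rightarrow> real)"
  assume n: "n \<ge> 1" and L: "L > 0" and T: "T \<ge> 1" and S: "\<forall>h. S h \<in> cube n"
  define q where "q t = query S (\<lambda>_. 0) t" for t
  have qc: "q t \<in> cube n" for t unfolding q_def query_def using S by simp
  define dd where "dd x = Min ((\<lambda>t. enorm n (x - q t)) ` {..<T})" for x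
  define f where "f x = - L * dd x" for x
  have fin: "finite ((\<lambda>t. enorm n (x - q t)) ` {..<T})" "((\<lambda>t. enorm n (x - q t)) ` {..<T}) \<noteq> {}" for x
    using T by (auto simp: lessThan_empty_iff)
  have dd_le: "dd x \<le> enorm n (x - q t)" if "t < T" for x t
    unfolding dd_def using fin that by (intro Min_le) auto
  have dd_ge: "dd x \<ge> r" if "\<And>t. t < T \<Longrightarrow> r \<le> enorm n (x - q t)" for x r
    unfolding dd_def using fin that by (subst Min_ge_iff) auto
  have dd_lip: "dd x \<le> dd y + enorm n (x - y)" for x y
  proof -
    obtain t where t: "t < T" "dd y = enorm n (y - q t)"
      using Min_in[OF fin(1)[of y] fin(2)[of y]] unfolding dd_def by auto
    have "dd x \<le> enorm n (x - q t)" using dd_le t by simp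
    also have "\<dots> \<le> enorm n (x - y) + enorm n (y - q t)" by (rule enorm_tri)
    finally show ?thesis using t by simp
  qed
  have lip: "\<forall>x\<in>cube n. \<forall>y\<in>cube n. \<bar>f x - f y\<bar> \<le> L * enorm n (x - y)"
  proof (intro ballI)
    fix x y
    have "\<bar>dd x - dd y\<bar> \<le> enorm n (x - y)"
      using dd_lip[of x y] dd_lip[of y x] enorm_sym[of n x y] by linarith
    hence "L * \<bar>dd x - dd y\<bar> \<le> L * enorm n (x - y)" using L by simp
    moreover have "\<bar>f x - f y\<bar> = L * \<bar>dd x - dd y\<bar>"
      unfolding f_def using L by (simp add: abs_mult right_diff_distrib[symmetric] abs_minus_commute)
    ultimately show "\<bar>f x - f y\<bar> \<le> L * enorm n (x - y)" by simp
  qed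
  have fq: "f (q t) = 0" if "t < T" for t
  proof -
    have "dd (q t) \<le> 0" using dd_le[OF that, of "q t"] by (simp add: enorm_self)
    moreover have "dd (q t) \<ge> 0" by (rule dd_ge) (simp add: enorm_nonneg)
    ultimately show ?thesis unfolding f_def by simp
  qed
  have hist_eq: "t \<le> T \<Longrightarrow> hist S f t = hist S (\<lambda>_. 0) t" for t
  proof (induction t)
    case 0 thus ?case by simp
  next
    case (Suc t)
    hence "t < T" by simp
    hence "f (S (hist S (\<lambda>_. 0) t)) = 0" using fq[of t] unfolding q_def query_def by simp
    thus ?case using Suc by simp
  qed
  have sum0: "(\<Sum>t<T. f (query S f t)) = 0"
    by (intro sum.neutral) (auto simp: query_def hist_eq fq[unfolded q_def query_def])
  define a where "a = real T powr (1 / real n)"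
  have Tpos: "real T > 0" using T by simp
  have a1: "a \<ge> 1" unfolding a_def using T by (intro ge_one_powr_ge_zero) auto
  have an: "a ^ n = real T"
  proof -
    have "a ^ n = a powr real n" using a1 by (simp add: powr_realpow)
    also have "\<dots> = real T" unfolding a_def using n Tpos by (simp add: powr_powr)
    finally show ?thesis .
  qed
  define m where "m = nat \<lfloor>11 * a\<rfloor> + 1"
  have m1: "m \<ge> 1" unfolding m_def by simp
  have mgt: "real m > 11 * a" unfolding m_def using a1 by linarith
  have mle: "real m \<le> 12 * a" unfolding m_def using a1 by linarith
  have big: "real T * (exp 1 * 4)^n < real m ^ n"
  proof -
    have "exp 1 * 4 < (11::real)" using e_less_272 by simp
    hence "(exp 1 * 4)^n < (11::real)^n" using n by (intro power_strict_mono) auto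
    hence "real T * (exp 1 * 4)^n < real T * 11^n" using Tpos by simp
    also have "\<dots> = (11 * a)^n" using an by (simp add: power_mult_distrib)
    also have "\<dots> \<le> real m ^ n" using mgt a1 by (intro power_mono) auto
    finally show ?thesis .
  qed
  obtain g where g: "g \<in> PiE {..<n} (\<lambda>_. {..<m})" and
    gfar: "\<forall>t<T. real n / (4 * real m^2) \<le> (\<Sum>i<n. ((2*real (g i)+1)/(2*real m) - q t i)^2)"
    using grid_far[OF m1, of T n q, OF _ big] qc unfolding cube_def by blast
  define z where "z i = (if i < n then (2*real (g i)+1)/(2*real m) else 0)" for i
  have mpos: "real m > 0" using m1 by simp
  have zc: "z \<in> cube n"
  proof -
    have "(2*real (g i)+1)/(2*real m) \<le> 1" if "i < n" for i
    proof -
      have "g i < m" using g that by auto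
      hence "2*real (g i)+1 \<le> 2*real m" by linarith
      thus ?thesis using mpos by simp
    qed
    thus ?thesis unfolding cube_def z_def by auto
  qed
  define r where "r = sqrt (real n) / (2 * real m)"
  have ddz: "dd z \<ge> r"
  proof (rule dd_ge)
    fix t assume t: "t < T"
    have "r = sqrt (real n / (4 * real m^2))"
      unfolding r_def using mpos by (simp add: real_sqrt_divide real_sqrt_mult power2_eq_square)
    also have "\<dots> \<le> sqrt (\<Sum>i<n. ((2*real (g i)+1)/(2*real m) - q t i)^2)"
      using gfar t by simp
    also have "\<dots> = enorm n (z - q t)" unfolding enorm_def z_def by simp
    finally show "r \<le> enorm n (z - q t)" .
  qed
  have bdd: "bdd_below (f ` cube n)"
  proof (rule bdd_belowI2)
    fix x assume x: "x \<in> cube n"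
    have "dd x \<le> enorm n (x - q 0)" using dd_le T by simp
    also have "\<dots> \<le> sqrt (real n)"
    proof -
      have "(\<Sum>i<n. ((x - q 0) i)^2) \<le> (\<Sum>i<n. 1)"
      proof (intro sum_mono)
        fix i assume "i \<in> {..<n}"
        hence "0 \<le> x i" "x i \<le> 1" "0 \<le> q 0 i" "q 0 i \<le> 1" using x qc[of 0] unfolding cube_def by auto
        hence "\<bar>(x - q 0) i\<bar> \<le> 1" by simp
        thus "((x - q 0) i)^2 \<le> 1" by (simp add: abs_le_square_iff[of _ 1, simplified])
      qed
      thus ?thesis unfolding enorm_def by simp
    qed
    finally show "- L * sqrt (real n) \<le> f x" unfolding f_def using L by simp
  qed
  have "Inf (f ` cube n) \<le> f z" using bdd zc by (intro cInf_lower) auto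
  also have "\<dots> \<le> - L * r" unfolding f_def using ddz L by simp
  finally have inf: "Inf (f ` cube n) \<le> - L * r" .
  have "real T powr (- 1 / real n) = 1 / a" unfolding a_def
    by (simp add: powr_minus_divide)
  hence "1/24 * L * sqrt (real n) * real T powr (- 1 / real n) = L * (sqrt (real n) / (24 * a))"
    by simp
  also have "\<dots> \<le> L * r"
  proof -
    have "sqrt (real n) / (24 * a) \<le> sqrt (real n) / (2 * real m)"
      using mle mpos a1 by (intro divide_left_mono) auto
    thus ?thesis unfolding r_def using L by (simp only: mult_le_cancel_left_pos)
  qed
  finally have fin2: "1/24 * L * sqrt (real n) * real T powr (- 1 / real n) \<le> L * r" .
  show "\<exists>f. (\<forall>x\<in>cube n. \<forall>y\<in>cube n. \<bar>f x - f y\<bar> \<le> L * enorm n (x - y)) \<and>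
          (\<Sum>t<T. f (query S f t)) / real T - Inf (f ` cube n)
            \<ge> 1/24 * L * sqrt (real n) * real T powr (- 1 / real n)"
    using lip inf sum0 fin2 by (intro exI[of _ f] conjI) auto
qed simp

end
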